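(* Let $c>1$ be a constant. There is a constant $d$ (depending only on $c$) such that for every convex $c$-fat polygon $P$ and every line $M$ cutting $P$ at two points $a$ and $b$ of its boundary, the length $s$ of the shorter of the two parts of the perimeter of $P$ between $a$ and $b$ satisfies $s\le d\cdot|ab|$.
   Context: A polygon is $c$-fat if the ratio of the radius of the smallest disc containing it to the radius of the largest disc contained in it is at most $c$. $|ab|$ denotes the Euclidean distance between $a$ and $b$. *)

theory Defs
  imports "HOL-Analysis.Analysis"
begin

text \<open>A convex polygon is given by n >= 3 vertices v 0, ..., v (n-1) listed in
  counterclockwise order, in strictly convex position: for every edge
  v i -> v (i+1 mod n), all other vertices lie strictly to its left.\<close>

definition cross :: "complex \<Rightarrow> complex \<Rightarrow> real" where
  "cross z w = Im (cnj z * w)"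

definition convex_polygon :: "nat \<Rightarrow> (nat \<Rightarrow> complex) \<Rightarrow> bool" where
  "convex_polygon n v \<longleftrightarrow> n \<ge> 3 \<and>
     (\<forall>i<n. \<forall>j<n. j \<noteq> i \<and> j \<noteq> Suc i mod n \<longrightarrow>
        cross (v (Suc i mod n) - v i) (v j - v i) > 0)"

definition polygon_region :: "nat \<Rightarrow> (nat \<Rightarrow> complex) \<Rightarrow> complex set" where
  "polygon_region n v = convex hull (v ` {..<n})"

definition edge_len :: "nat \<Rightarrow> (nat \<Rightarrow> complex) \<Rightarrow> nat \<Rightarrow> real" where
  "edge_len n v i = dist (v i) (v (Suc i mod n))"

definition cum_len :: "nat \<Rightarrow> (nat \<Rightarrow> complex) \<Rightarrow> nat \<Rightarrow> real" where
  "cum_len n v i = (\<Sum>k<i. edge_len n v k)"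

definition perimeter :: "nat \<Rightarrow> (nat \<Rightarrow> complex) \<Rightarrow> real" where
  "perimeter n v = cum_len n v n"

definition at_arclen :: "nat \<Rightarrow> (nat \<Rightarrow> complex) \<Rightarrow> real \<Rightarrow> complex \<Rightarrow> bool" where
  "at_arclen n v s p \<longleftrightarrow> 0 \<le> s \<and> s < perimeter n v \<and>
     (\<exists>i<n. cum_len n v i \<le> s \<and> s \<le> cum_len n v (Suc i) \<and>
        p = v i + of_real ((s - cum_len n v i) / edge_len n v i) * (v (Suc i mod n) - v i))"

definition circumradius :: "complex set \<Rightarrow> real" where
  "circumradius S = Inf {R. \<exists>x. S \<subseteq> cball x R}"

definition inradius :: "complex set \<Rightarrow> real" where
  "inradius S = Sup {r. \<exists>y. cball y r \<subseteq> S}"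

definition fat :: "real \<Rightarrow> complex set \<Rightarrow> bool" where
  "fat c S \<longleftrightarrow> circumradius S / inradius S \<le> c"

definition is_line :: "complex set \<Rightarrow> bool" where
  "is_line M \<longleftrightarrow> (\<exists>p u. u \<noteq> 0 \<and> M = {p + of_real t * u | t. True})"

end

theory Submission
  imports Defs
begin


definition clamp :: "real \<Rightarrow> real" where "clamp t = max 0 (min 1 t)"

locale cpoly =
  fixes n :: nat and v :: "nat \<Rightarrow> complex"
  assumes cp: "convex_polygon n v"
begin

definition e :: "nat \<Rightarrow> complex" where "e k = v (Suc k mod n) - v k"
definition g :: "nat \<Rightarrow> complex \<Rightarrow> real" where "g k z = cross (e k) (z - v k)"
abbreviation len where "len \<equiv> edge_len n v"
abbreviation cum where "cum \<equiv> cum_len n v"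
abbreviation perim where "perim \<equiv> perimeter n v"
abbreviation PP where "PP \<equiv> polygon_region n v"

definition gam :: "real \<Rightarrow> complex" where
  "gam s = v 0 + (\<Sum>k<n. of_real (clamp ((s - cum k) / len k)) * e k)"

lemma n3: "n \<ge> 3" using cp unfolding convex_polygon_def by auto

lemma vcross: "i < n \<Longrightarrow> j < n \<Longrightarrow> j \<noteq> i \<Longrightarrow> j \<noteq> Suc i mod n \<Longrightarrow> g i (v j) > 0"
  using cp unfolding convex_polygon_def g_def e_def by auto

lemma cross_lin1: "cross z (x + y) = cross z x + cross z y"
  by (simp add: cross_def algebra_simps)
lemma cross_scale: "cross z (of_real t * x) = t * cross z x"
  by (simp add: cross_def algebra_simps)
lemma cross_self: "cross z z = 0"
  by (simp add: cross_def)
lemma cross_rot: "cross z (\<i> * z) = (cmod z)^2"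
  by (simp only: cross_def cmod_power2) (simp add: power2_eq_square)
lemma cross_anti: "cross z w = - cross w z"
  by (simp add: cross_def algebra_simps)
lemma cross_minus: "cross z (x - y) = cross z x - cross z y"
  by (simp add: cross_def algebra_simps)

lemma mod_ne: assumes "k < n" "m < n" "0 < m" shows "(k + m) mod n \<noteq> k"
proof
  assume "(k + m) mod n = k"
  then have "(k + m) mod n = k mod n" using assms by simp
  then have "n dvd m" using mod_eq_dvd_iff_nat[of k "k+m" n] by simp
  then show False using assms by (simp add: nat_dvd_not_less)
qed

lemma mod_ne2: assumes "k < n" "n \<ge> 3" shows "(k + 2) mod n \<noteq> Suc k mod n"
proof
  assume "(k + 2) mod n = Suc k mod n"
  then have "n dvd (k+2) - Suc k" using mod_eq_dvd_iff_nat[of "Suc k" "k+2" n] by simp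
  then show False using assms by simp
qed

lemma e_nz: assumes "k < n" shows "e k \<noteq> 0"
proof -
  have "n \<ge> 3" by (rule n3)
  let ?j = "(k+2) mod n"
  have j: "?j < n" "?j \<noteq> k" "?j \<noteq> Suc k mod n"
    using mod_ne[OF assms, of 2] mod_ne2[OF assms \<open>n\<ge>3\<close>] \<open>n\<ge>3\<close> by auto
  have "g k (v ?j) > 0" using vcross[OF assms j] .
  then show ?thesis unfolding g_def cross_def by auto
qed

lemma len_e: "len k = cmod (e k)"
  unfolding edge_len_def e_def by (simp add: dist_norm norm_minus_commute)

lemma len_pos: "k < n \<Longrightarrow> len k > 0"
  using e_nz len_e by auto

lemma cum_Suc: "cum (Suc k) = cum k + len k"
  unfolding cum_len_def by simp

lemma cum_0: "cum 0 = 0" unfolding cum_len_def by simp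

lemma perim_cum: "perim = cum n" unfolding perimeter_def by simp

lemma cum_mono: "j \<le> k \<Longrightarrow> k \<le> n \<Longrightarrow> cum j \<le> cum k"
proof (induction k)
  case 0 then show ?case by simp
next
  case (Suc k)
  show ?case
  proof (cases "j = Suc k")
    case False
    then have "cum j \<le> cum k" using Suc by simp
    also have "\<dots> \<le> cum (Suc k)" using cum_Suc len_pos[of k] Suc by simp
    finally show ?thesis .
  qed simp
qed

lemma cum_nonneg: "k \<le> n \<Longrightarrow> cum k \<ge> 0"
  using cum_mono[of 0 k] cum_0 by simp

lemma sum_e: "i < n \<Longrightarrow> (\<Sum>k<i. e k) = v i - v 0"
proof (induction i)
  case 0 then show ?case by simp
next
  case (Suc i)
  then have "Suc i mod n = Suc i" by simp
  then show ?case using Suc by (simp add: e_def)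
qed

lemma sum_e_all: "(\<Sum>k<n. e k) = 0"
proof -
  have n: "n = Suc (n - 1)" using n3 by simp
  have "(\<Sum>k<n. e k) = (\<Sum>k<n-1. e k) + e (n - 1)"
    by (subst n) simp
  also have "\<dots> = v (n-1) - v 0 + (v 0 - v (n - 1))"
  proof -
    have "Suc (n - 1) mod n = 0" using n by (metis mod_self)
    then show ?thesis using sum_e[of "n-1"] n3 unfolding e_def by simp
  qed
  finally show ?thesis by simp
qed

lemma gam_edge:
  assumes k: "k < n" and s: "cum k \<le> s" "s \<le> cum (Suc k)"
  shows "gam s = v k + of_real ((s - cum k) / len k) * e k"
proof -
  let ?a = "(s - cum k) / len k"
  have lp: "len k > 0" using len_pos k by simp
  have a01: "0 \<le> ?a" "?a \<le> 1" using s lp cum_Suc[of k] by (auto simp: field_simps)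
  have trm: "of_real (clamp ((s - cum j) / len j)) * e j =
     (if j < k then e j else 0) + (if j = k then of_real ?a * e k else 0)" if j: "j < n" for j
  proof -
    have lj: "len j > 0" using len_pos j by simp
    consider "j < k" | "j = k" | "j > k" by linarith
    then show ?thesis
    proof cases
      case 1
      then have "cum (Suc j) \<le> cum k" using cum_mono k by simp
      then have "(s - cum j) / len j \<ge> 1" using s lj cum_Suc[of j] by (simp add: field_simps)
      then show ?thesis using 1 by (simp add: clamp_def)
    next
      case 2 then show ?thesis using a01 by (simp add: clamp_def)
    next
      case 3
      then have "cum (Suc k) \<le> cum j" using cum_mono j by simp
      then have "(s - cum j) / len j \<le> 0" using s lj by (simp add: divide_nonpos_pos)
      then show ?thesis using 3 by (simp add: clamp_def)
    qed
  qed
  have "(\<Sum>j<n. of_real (clamp ((s - cum j) / len j)) * e j) =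
     (\<Sum>j<n. (if j < k then e j else 0) + (if j = k then of_real ?a * e k else 0))"
    using trm by (intro sum.cong) auto
  also have "\<dots> = (\<Sum>j<n. if j < k then e j else 0) + of_real ?a * e k"
    using k by (simp add: sum.distrib)
  also have "(\<Sum>j<n. if j < k then e j else 0) = (\<Sum>j<k. e j)"
    using k by (intro sum.mono_neutral_cong_right) auto
  also have "\<dots> = v k - v 0" using sum_e[OF k] .
  finally have "gam s = v 0 + ((v k - v 0) + of_real ?a * e k)" unfolding gam_def by simp
  then show ?thesis by simp
qed

lemma gam_le0: assumes "s \<le> 0" shows "gam s = v 0"
proof -
  have "clamp ((s - cum k) / len k) = 0" if "k < n" for k
  proof -
    have "cum k \<ge> 0" using cum_nonneg that by simp
    then have "(s - cum k) / len k \<le> 0" using assms len_pos[OF that] by (simp add: divide_nonpos_pos)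
    then show ?thesis by (simp add: clamp_def)
  qed
  then show ?thesis unfolding gam_def by simp
qed

lemma gam_ge: assumes "s \<ge> perim" shows "gam s = v 0"
proof -
  have "clamp ((s - cum k) / len k) = 1" if "k < n" for k
  proof -
    have "cum (Suc k) \<le> perim" using cum_mono[of "Suc k" n] that perim_cum by simp
    then have "(s - cum k) / len k \<ge> 1" using assms len_pos[OF that] cum_Suc[of k] by (simp add: field_simps)
    then show ?thesis by (simp add: clamp_def)
  qed
  then have "gam s = v 0 + (\<Sum>k<n. e k)" unfolding gam_def by simp
  then show ?thesis using sum_e_all by simp
qed

lemma isCont_gam: "isCont gam s"
  unfolding gam_def clamp_def using len_pos by (intro continuous_intros) (auto simp: less_imp_neq[symmetric])

lemma edge_exists: "1 \<le> m \<Longrightarrow> m \<le> n \<Longrightarrow> 0 \<le> s \<Longrightarrow> s \<le> cum m \<Longrightarrow> \<exists>k<m. cum k \<le> s \<and> s \<le> cum (Suc k)"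
proof (induction m)
  case 0 then show ?case by simp
next
  case (Suc m)
  show ?case
  proof (cases "s \<le> cum m \<and> 1 \<le> m")
    case True
    then show ?thesis using Suc by (meson less_SucI Suc_leD)
  next
    case False
    then have "cum m \<le> s"
      using Suc.prems cum_0 by (metis le_cases less_one not_le)
    then show ?thesis using Suc.prems by auto
  qed
qed

lemma edge_rep: assumes "0 \<le> s" "s \<le> perim"
  obtains k where "k < n" "cum k \<le> s" "s \<le> cum (Suc k)"
  using edge_exists[of n s] assms n3 perim_cum by auto

lemma at_arclen_gam: assumes "at_arclen n v s p" shows "p = gam s" "0 \<le> s" "s < perim"
proof -
  show "0 \<le> s" "s < perim" using assms unfolding at_arclen_def by auto
  from assms obtain i where i: "i < n" "cum i \<le> s" "s \<le> cum (Suc i)"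
    "p = v i + of_real ((s - cum i) / len i) * (v (Suc i mod n) - v i)"
    unfolding at_arclen_def by blast
  then show "p = gam s" using gam_edge[OF i(1-3)] by (simp add: e_def)
qed

lemma convex_PP: "convex PP" unfolding polygon_region_def by simp
lemma compact_PP: "compact PP" unfolding polygon_region_def
  by (simp add: compact_convex_hull finite_imp_compact)
lemma vert_PP: "j < n \<Longrightarrow> v j \<in> PP" unfolding polygon_region_def
  by (simp add: hull_inc)

lemma g_lin: "g k (of_real u * x + of_real (1 - u) * y) = u * g k x + (1 - u) * g k y"
  by (simp add: g_def cross_def algebra_simps)

lemma halfplane_convex: "convex {z. 0 \<le> g k z}"
  unfolding convex_def
proof (intro allI impI ballI)
  fix x y and u w :: real
  assume xy: "x \<in> {z. 0 \<le> g k z}" "y \<in> {z. 0 \<le> g k z}" and uw: "0 \<le> u" "0 \<le> w" "u + w = 1"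
  then have "w = 1 - u" by simp
  then have "g k (u *\<^sub>R x + w *\<^sub>R y) = u * g k x + w * g k y"
    using g_lin[of k u x y] by (simp add: scaleR_conv_of_real)
  then show "u *\<^sub>R x + w *\<^sub>R y \<in> {z. 0 \<le> g k z}" using xy uw by simp
qed

lemma g_vert_nonneg: assumes "k < n" "j < n" shows "g k (v j) \<ge> 0"
proof -
  consider "j = k" | "j = Suc k mod n" | "j \<noteq> k \<and> j \<noteq> Suc k mod n" by blast
  then show ?thesis
  proof cases
    case 1 then show ?thesis by (simp add: g_def cross_def)
  next
    case 2 then show ?thesis by (simp add: g_def cross_self e_def)
  next
    case 3 then show ?thesis using vcross[OF assms] by force
  qed
qed

lemma g_PP: assumes "k < n" "z \<in> PP" shows "g k z \<ge> 0"
proof -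
  have "PP \<subseteq> {z. 0 \<le> g k z}"
    unfolding polygon_region_def
    using g_vert_nonneg[OF assms(1)] halfplane_convex by (intro hull_minimal) auto
  then show ?thesis using assms by auto
qed

lemma edge_pt_eq: "v k + of_real a * e k = of_real (1 - a) * v k + of_real a * v (Suc k mod n)"
  by (simp add: e_def algebra_simps)

lemma edge_PP: assumes "k < n" "0 \<le> a" "a \<le> 1" shows "v k + of_real a * e k \<in> PP"
proof -
  have "Suc k mod n < n" using assms by simp
  then have "of_real (1 - a) * v k + of_real a * v (Suc k mod n) \<in> PP"
    using convexD[OF convex_PP vert_PP[OF assms(1)] vert_PP[of "Suc k mod n"], of "1 - a" a] assms
    by (simp add: scaleR_conv_of_real)
  then show ?thesis by (simp add: edge_pt_eq)
qed

lemma g_edge0: "g k (v k + of_real a * e k) = 0"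
  by (simp add: g_def cross_scale cross_self)

lemma g_shift: "g k (z - of_real t * (\<i> * e k)) = g k z - t * (cmod (e k))^2"
  by (simp add: g_def cross_minus cross_scale cross_rot)

lemma not_interior: assumes "k < n" "g k z = 0" shows "z \<notin> interior PP"
proof
  assume "z \<in> interior PP"
  then obtain r where r: "r > 0" "ball z r \<subseteq> PP" using mem_interior by blast
  have en: "cmod (e k) > 0" using e_nz assms by simp
  define t where "t = r / 2 / cmod (e k)"
  have tpos: "t > 0" using r en by (simp add: t_def)
  have "dist z (z - of_real t * (\<i> * e k)) = cmod (of_real t * (\<i> * e k))"
    by (simp add: dist_norm)
  also have "\<dots> = t * cmod (e k)" using tpos by (simp add: norm_mult)
  also have "\<dots> = r / 2" using en by (simp add: t_def)
  finally have "z - of_real t * (\<i> * e k) \<in> PP" using r by auto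
  then have "g k (z - of_real t * (\<i> * e k)) \<ge> 0" using g_PP assms by simp
  moreover have "g k (z - of_real t * (\<i> * e k)) = - (r/2) * cmod (e k)"
  proof -
    have "g k (z - of_real t * (\<i> * e k)) = g k z - t * (cmod (e k))^2" by (rule g_shift)
    also have "\<dots> = - (r/2) * cmod (e k)" using assms en by (simp add: t_def power2_eq_square)
    finally show ?thesis .
  qed
  moreover have "r * cmod (e k) > 0" using r en by simp
  ultimately show False by linarith
qed

lemma in_frontier: "z \<in> PP \<Longrightarrow> z \<notin> interior PP \<Longrightarrow> z \<in> frontier PP"
  unfolding frontier_def using closure_subset by auto

lemma gam_PP: assumes "0 \<le> s" "s \<le> perim" shows "gam s \<in> PP" "gam s \<in> frontier PP"
proof -
  obtain k where k: "k < n" "cum k \<le> s" "s \<le> cum (Suc k)" using edge_rep assms by blast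
  have lp: "len k > 0" using len_pos k by simp
  have a01: "0 \<le> (s - cum k) / len k" "(s - cum k) / len k \<le> 1"
    using k lp cum_Suc[of k] by (auto simp: field_simps)
  have z: "gam s = v k + of_real ((s - cum k) / len k) * e k" using gam_edge[OF k] .
  show "gam s \<in> PP" unfolding z by (rule edge_PP[OF k(1) a01])
  show "gam s \<in> frontier PP" unfolding z
    by (rule in_frontier[OF edge_PP[OF k(1) a01] not_interior[OF k(1) g_edge0]])
qed

lemma g_lin_edge: "g k (v j + of_real a * e j) = (1 - a) * g k (v j) + a * g k (v (Suc j mod n))"
  by (simp add: g_def cross_def e_def algebra_simps)

lemma suc_mod_inj: assumes "k < n" "k' < n" "Suc k mod n = Suc k' mod n" shows "k = k'"
proof (cases "Suc k < n")
  case True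
  show ?thesis
  proof (cases "Suc k' < n")
    case True then show ?thesis using assms \<open>Suc k < n\<close> by simp
  next
    case False then have "Suc k' = n" using assms by simp
    then show ?thesis using assms True by simp
  qed
next
  case False then have n: "Suc k = n" using assms by simp
  show ?thesis
  proof (cases "Suc k' < n")
    case True then show ?thesis using assms n by simp
  next
    case False then show ?thesis using assms n by simp
  qed
qed

lemma inj_core:
  assumes k: "k < n" "k' < n" "k' \<noteq> k" "k' \<noteq> Suc k mod n"
    and a: "0 \<le> a'" "a' \<le> 1" and z: "g k (v k' + of_real a' * e k') = 0"
  shows "k = Suc k' mod n \<and> a' = 1"
proof -
  have p1: "g k (v k') > 0" using vcross k by simp
  have ge: "g k (v (Suc k' mod n)) \<ge> 0" using g_vert_nonneg k by simp
  have eq: "(1 - a') * g k (v k') + a' * g k (v (Suc k' mod n)) = 0" using z g_lin_edge by simp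
  show ?thesis
  proof (cases "Suc k' mod n = k")
    case True
    then have "g k (v (Suc k' mod n)) = 0" by (simp add: g_def cross_def)
    then have "(1 - a') * g k (v k') = 0" using eq by simp
    then show ?thesis using p1 True by simp
  next
    case False
    have "Suc k' mod n \<noteq> Suc k mod n" using suc_mod_inj k by blast
    then have p2: "g k (v (Suc k' mod n)) > 0" using vcross k(1) False by simp
    have "(1 - a') * g k (v k') \<ge> 0" "a' * g k (v (Suc k' mod n)) \<ge> 0" using a p1 p2 by simp_all
    moreover have "(1 - a') * g k (v k') > 0 \<or> a' * g k (v (Suc k' mod n)) > 0"
      using a p1 p2 by (cases "a' = 1") auto
    ultimately show ?thesis using eq by linarith
  qed
qed

lemma edge_inj1: assumes "k < n" "v k + of_real a * e k = v k + of_real b * e k" shows "a = b"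
  using assms e_nz[OF assms(1)] by simp

lemma inj_edge:
  assumes k: "k < n" "k' < n" and a: "0 \<le> a" "a \<le> 1" "0 \<le> a'" "a' \<le> 1"
    and z: "v k + of_real a * e k = v k' + of_real a' * e k'"
  shows "(k = k' \<and> a = a') \<or> (k' = Suc k mod n \<and> a = 1 \<and> a' = 0) \<or> (k = Suc k' mod n \<and> a' = 1 \<and> a = 0)"
proof -
  have gk: "g k (v k' + of_real a' * e k') = 0" unfolding z[symmetric] by (rule g_edge0)
  have gk': "g k' (v k + of_real a * e k) = 0" unfolding z by (rule g_edge0)
  consider "k' = k" | "k' = Suc k mod n" | "k' \<noteq> k \<and> k' \<noteq> Suc k mod n" by blast
  then show ?thesis
  proof cases
    case 1
    then have "v k + of_real a * e k = v k + of_real a' * e k" using z by simp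
    then have "a = a'" by (rule edge_inj1[OF k(1)])
    then show ?thesis using 1 by blast
  next
    case 2
    have m2: "(k + 2) mod n \<noteq> k" by (rule mod_ne[OF k(1)]) (use n3 in auto)
    have m1: "(k + 1) mod n \<noteq> k" by (rule mod_ne[OF k(1)]) (use n3 in auto)
    have "Suc k' mod n = (k + 2) mod n" unfolding 2 by (simp add: mod_Suc_eq)
    then have kk1: "k \<noteq> Suc k' mod n" using m2 by simp
    have kk2: "k \<noteq> k'" using 2 m1 by simp
    have "k' = Suc k mod n \<and> a = 1" by (rule inj_core[OF k(2) k(1) kk2 kk1 a(1,2) gk'])
    then have h: "k' = Suc k mod n" "a = 1" by auto
    have "v k + of_real a * e k = v k'" unfolding h e_def by simp
    then have "v k' + of_real a' * e k' = v k' + of_real 0 * e k'" using z by simp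
    then have "a' = 0" by (rule edge_inj1[OF k(2)])
    then show ?thesis using h by blast
  next
    case 3
    then have *: "k = Suc k' mod n \<and> a' = 1" using inj_core[OF k(1) k(2) _ _ a(3,4) gk] by blast
    then have h: "k = Suc k' mod n" "a' = 1" by auto
    have "v k' + of_real a' * e k' = v k" unfolding h e_def by simp
    then have "v k + of_real a * e k = v k + of_real 0 * e k" using z by simp
    then have "a = 0" by (rule edge_inj1[OF k(1)])
    then show ?thesis using h by blast
  qed
qed

lemma gam_inj: assumes "0 \<le> s" "s < perim" "0 \<le> s'" "s' < perim" "gam s = gam s'"
  shows "s = s'"
proof -
  obtain k where k: "k < n" "cum k \<le> s" "s \<le> cum (Suc k)"
    by (rule edge_rep[of s]) (use assms in auto)
  obtain k' where k': "k' < n" "cum k' \<le> s'" "s' \<le> cum (Suc k')"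
    by (rule edge_rep[of s']) (use assms in auto)
  define a where "a = (s - cum k) / len k"
  define a' where "a' = (s' - cum k') / len k'"
  have lp: "len k > 0" "len k' > 0" using len_pos k k' by simp_all
  have a01: "0 \<le> a" "a \<le> 1" using k lp cum_Suc[of k] by (auto simp: field_simps a_def)
  have a01': "0 \<le> a'" "a' \<le> 1" using k' lp cum_Suc[of k'] by (auto simp: field_simps a'_def)
  have sa: "s = cum k + a * len k" using lp by (simp add: a_def)
  have sa': "s' = cum k' + a' * len k'" using lp by (simp add: a'_def)
  have g1: "gam s = v k + of_real a * e k" unfolding a_def by (rule gam_edge[OF k])
  have g2: "gam s' = v k' + of_real a' * e k'" unfolding a'_def by (rule gam_edge[OF k'])
  have "v k + of_real a * e k = v k' + of_real a' * e k'"
    using g1 g2 assms(5) by simp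
  from inj_edge[OF k(1) k'(1) a01 a01' this] show ?thesis
  proof (elim disjE conjE)
    assume "k = k'" "a = a'" then show ?thesis using sa sa' by simp
  next
    assume h: "k' = Suc k mod n" "a = 1" "a' = 0"
    have s1: "s = cum (Suc k)" using sa h(2) cum_Suc[of k] by simp
    have s2: "s' = cum k'" using sa' h(3) by simp
    show ?thesis
    proof (cases "Suc k < n")
      case True
      then have "k' = Suc k" using h(1) by simp
      then show ?thesis using s1 s2 by simp
    next
      case False
      then have "Suc k = n" using k by simp
      then have "s = perim" using s1 perim_cum by simp
      then show ?thesis using assms(2) by simp
    qed
  next
    assume h: "k = Suc k' mod n" "a' = 1" "a = 0"
    have s1: "s' = cum (Suc k')" using sa' h(2) cum_Suc[of k'] by simp
    have s2: "s = cum k" using sa h(3) by simp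
    show ?thesis
    proof (cases "Suc k' < n")
      case True
      then have "k = Suc k'" using h(1) by simp
      then show ?thesis using s1 s2 by simp
    next
      case False
      then have "Suc k' = n" using k' by simp
      then have "s' = perim" using s1 perim_cum by simp
      then show ?thesis using assms(4) by simp
    qed
  qed
qed

end


lemma piecewise_mono:
  fixes G :: "real \<Rightarrow> real" and c :: "nat \<Rightarrow> real"
  assumes piece: "\<And>k s' s. k < N \<Longrightarrow> c k \<le> s' \<Longrightarrow> s' \<le> s \<Longrightarrow> s \<le> c (Suc k) \<Longrightarrow> l \<le> s' \<Longrightarrow> s \<le> r \<Longrightarrow> G s \<le> G s'"
  shows "c 0 \<le> s' \<Longrightarrow> s' \<le> s \<Longrightarrow> s \<le> c N \<Longrightarrow> l \<le> s' \<Longrightarrow> s \<le> r \<Longrightarrow> G s \<le> G s'"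
  using piece
proof (induction N arbitrary: s s')
  case 0 then have "s = s'" by linarith
  then show ?case by simp
next
  case (Suc N)
  have IH: "G t \<le> G t'" if "c 0 \<le> t'" "t' \<le> t" "t \<le> c N" "l \<le> t'" "t \<le> r" for t t'
    by (rule Suc.IH[OF that]) (rule Suc.prems(6), auto)
  show ?case
  proof (cases "s \<le> c N")
    case True then show ?thesis using IH Suc.prems by simp
  next
    case False
    show ?thesis
    proof (cases "c N \<le> s'")
      case True then show ?thesis using Suc.prems(6)[of N s' s] Suc.prems by simp
    next
      case F2: False
      have "G s \<le> G (c N)" using Suc.prems(6)[of N "c N" s] Suc.prems False F2 by simp
      also have "G (c N) \<le> G s'" using IH[of s' "c N"] Suc.prems False F2 by simp
      finally show ?thesis .
    qed
  qed
qed

lemma sign_const: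
  fixes f :: "real \<Rightarrow> real"
  assumes cont: "\<And>s. isCont f s" and nz: "\<And>s. lo < s \<Longrightarrow> s < hi \<Longrightarrow> f s \<noteq> 0"
  shows "(\<forall>s. lo < s \<and> s < hi \<longrightarrow> f s \<ge> 0) \<or> (\<forall>s. lo < s \<and> s < hi \<longrightarrow> f s \<le> 0)"
proof (rule ccontr)
  assume "\<not> ?thesis"
  then obtain s1 s2 where s: "lo < s1" "s1 < hi" "f s1 < 0" "lo < s2" "s2 < hi" "f s2 > 0"
    by (auto simp: not_le)
  show False
  proof (cases "s1 \<le> s2")
    case True
    obtain t where "s1 \<le> t" "t \<le> s2" "f t = 0"
      using IVT[of f s1 0 s2] s True cont by auto
    then show False using nz[of t] s by simp
  next
    case False
    obtain t where "s2 \<le> t" "t \<le> s1" "f t = 0"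
      using IVT2[of f s1 0 s2] s False cont by auto
    then show False using nz[of t] s by simp
  qed
qed



lemma cross_rotinv: "cmod u = 1 \<Longrightarrow> cross (cnj u * z) (cnj u * w) = cross z w"
proof -
  assume u: "cmod u = 1"
  have "cnj (cnj u * z) * (cnj u * w) = (u * cnj u) * (cnj z * w)" by (simp add: algebra_simps)
  also have "u * cnj u = 1"
  proof -
    have "u * cnj u = of_real ((cmod u)^2)" by (rule complex_norm_square[symmetric])
    then show ?thesis using u by simp
  qed
  finally have "cnj (cnj u * z) * (cnj u * w) = cnj z * w" by simp
  then show ?thesis unfolding cross_def by (rule arg_cong[where f=Im])
qed

lemma cross_coords: "cross z w = Re z * Im w - Im z * Re w"
  by (simp add: cross_def)

locale arc_setup = cpoly +
  fixes M a b sa sb oc rho x R u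
  assumes line: "is_line M" and front: "M \<inter> frontier PP = {a, b}" and ab: "a \<noteq> b"
    and sa0: "0 \<le> sa" and sab: "sa < sb" and sbP: "sb < perim"
    and a_eq: "a = gam sa" and b_eq: "b = gam sb"
    and ball: "cball oc rho \<subseteq> PP" and rho: "rho > 0" and circ: "PP \<subseteq> cball x R"
    and u1: "cmod u = 1" and uab: "Im (cnj u * (b - a)) = 0" and uo: "Im (cnj u * (oc - a)) \<le> 0"
begin

definition Y :: "complex \<Rightarrow> real" where "Y z = Im (cnj u * (z - a))"

lemma ucnj: "u * cnj u = 1"
proof -
  have "u * cnj u = of_real ((cmod u)^2)" by (rule complex_norm_square[symmetric])
  then show ?thesis using u1 by simp
qed

lemma real_of_Im0: "Im w = 0 \<Longrightarrow> w = of_real (Re w)"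
  by (simp add: complex_eq_iff)

lemma Y_zero_M: assumes "Y z = 0" shows "z \<in> M"
proof -
  obtain p w where M: "w \<noteq> 0" "M = {p + of_real t * w | t. True}" using line unfolding is_line_def by blast
  have "a \<in> M" "b \<in> M" using front by auto
  then obtain t1 t2 where t: "a = p + of_real t1 * w" "b = p + of_real t2 * w" using M by auto
  define r where "r = Re (cnj u * (b - a))"
  define r' where "r' = Re (cnj u * (z - a))"
  have r: "cnj u * (b - a) = of_real r" unfolding r_def using uab real_of_Im0 by blast
  have r': "cnj u * (z - a) = of_real r'" unfolding r'_def using assms real_of_Im0 unfolding Y_def by blast
  have ba: "b - a = u * of_real r" using r ucnj by (metis mult.assoc mult.left_neutral)
  have za: "z - a = u * of_real r'" using r' ucnj by (metis mult.assoc mult.left_neutral)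
  have "r \<noteq> 0" using ba ab by auto
  define cc where "cc = r' / r"
  have "z = a + of_real cc * (b - a)" using za ba \<open>r \<noteq> 0\<close>
    by (simp add: field_simps cc_def)
  also have "b - a = of_real (t2 - t1) * w" unfolding t by (simp add: algebra_simps)
  also have "a + of_real cc * (of_real (t2 - t1) * w) = p + of_real (t1 + cc * (t2 - t1)) * w"
    unfolding t by (simp add: algebra_simps)
  finally have "z = p + of_real (t1 + cc * (t2 - t1)) * w" .
  then show ?thesis unfolding M(2) by blast
qed

definition Gam :: "real \<Rightarrow> complex" where "Gam s = gam s + gam (s - perim) - v 0"

lemma perim_pos: "perim > 0" using sa0 sab sbP by simp

lemma Gam1: "s \<le> perim \<Longrightarrow> Gam s = gam s"
  unfolding Gam_def using gam_le0[of "s - perim"] by simp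
lemma Gam2: "s \<ge> perim \<Longrightarrow> Gam s = gam (s - perim)"
  unfolding Gam_def using gam_ge[of s] by simp
lemma isCont_Gam: "isCont Gam s"
  unfolding Gam_def by (intro continuous_intros isCont_gam continuous_at_compose[OF _ isCont_gam, unfolded o_def])

lemma a_front: "a \<in> frontier PP" "a \<in> PP" and b_front: "b \<in> frontier PP" "b \<in> PP"
  using gam_PP[of sa] gam_PP[of sb] sa0 sab sbP a_eq b_eq by auto

lemma not_ab: assumes "z \<in> frontier PP" "z \<notin> {a, b}" shows "Y z \<noteq> 0"
  using Y_zero_M front assms by blast

lemma arc1_nz: "sa < s \<Longrightarrow> s < sb \<Longrightarrow> Y (Gam s) \<noteq> 0"
proof -
  assume s: "sa < s" "s < sb"
  have G: "Gam s = gam s" using Gam1 s sbP by simp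
  have "gam s \<noteq> a" using gam_inj[of s sa] s sa0 sbP a_eq by auto
  moreover have "gam s \<noteq> b" using gam_inj[of s sb] s sa0 sbP b_eq by auto
  moreover have "gam s \<in> frontier PP" using gam_PP[of s] s sa0 sbP by simp
  ultimately show ?thesis using not_ab G by simp
qed

lemma arc2_nz: "sb < s \<Longrightarrow> s < sa + perim \<Longrightarrow> Y (Gam s) \<noteq> 0"
proof -
  assume s: "sb < s" "s < sa + perim"
  show ?thesis
  proof (cases "s < perim")
    case True
    have G: "Gam s = gam s" using Gam1 True by simp
    have "gam s \<noteq> a" using gam_inj[of s sa] s True sa0 sab a_eq by auto
    moreover have "gam s \<noteq> b" using gam_inj[of s sb] s True sa0 sab b_eq by auto
    moreover have "gam s \<in> frontier PP" using gam_PP[of s] s sa0 sab True by simp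
    ultimately show ?thesis using not_ab G by simp
  next
    case False
    have G: "Gam s = gam (s - perim)" using Gam2 False by simp
    have "gam (s - perim) \<noteq> a" using gam_inj[of "s - perim" sa] s False sa0 sab sbP a_eq by auto
    moreover have "gam (s - perim) \<noteq> b" using gam_inj[of "s - perim" sb] s False sa0 sab sbP b_eq by auto
    moreover have "gam (s - perim) \<in> frontier PP" using gam_PP[of "s - perim"] s sa0 sab sbP False by simp
    ultimately show ?thesis using not_ab G by simp
  qed
qed

lemma Ya: "Y a = 0" by (simp add: Y_def)
lemma Yb: "Y b = 0" using uab by (simp add: Y_def)

lemma isCont_YGam: "isCont (\<lambda>s. Y (Gam s)) s"
  unfolding Y_def by (intro isCont_Im continuous_intros isCont_Gam)

end


context arc_setup begin

lemma Gam_sa: "Gam sa = a" using Gam1[of sa] sab sbP a_eq by simp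
lemma Gam_sb: "Gam sb = b" using Gam1[of sb] sbP b_eq by simp
lemma Gam_saP: "Gam (sa + perim) = a" using Gam2[of "sa + perim"] sa0 a_eq by simp

lemma arc1_sign: "(\<forall>s. sa \<le> s \<and> s \<le> sb \<longrightarrow> Y (Gam s) \<ge> 0) \<or> (\<forall>s. sa \<le> s \<and> s \<le> sb \<longrightarrow> Y (Gam s) \<le> 0)"
proof -
  have "(\<forall>s. sa < s \<and> s < sb \<longrightarrow> Y (Gam s) \<ge> 0) \<or> (\<forall>s. sa < s \<and> s < sb \<longrightarrow> Y (Gam s) \<le> 0)"
    by (rule sign_const[OF isCont_YGam arc1_nz])
  moreover have "Y (Gam sa) = 0" "Y (Gam sb) = 0" using Gam_sa Gam_sb Ya Yb by simp_all
  ultimately show ?thesis by (metis order.order_iff_strict)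
qed

lemma arc2_sign: "(\<forall>s. sb \<le> s \<and> s \<le> sa + perim \<longrightarrow> Y (Gam s) \<ge> 0) \<or> (\<forall>s. sb \<le> s \<and> s \<le> sa + perim \<longrightarrow> Y (Gam s) \<le> 0)"
proof -
  have "(\<forall>s. sb < s \<and> s < sa + perim \<longrightarrow> Y (Gam s) \<ge> 0) \<or> (\<forall>s. sb < s \<and> s < sa + perim \<longrightarrow> Y (Gam s) \<le> 0)"
    by (rule sign_const[OF isCont_YGam arc2_nz])
  moreover have "Y (Gam sb) = 0" "Y (Gam (sa + perim)) = 0" using Gam_saP Gam_sb Ya Yb by simp_all
  ultimately show ?thesis by (metis order.order_iff_strict)
qed

lemma Y_lin: "Y (of_real t * z + of_real (1 - t) * w) = t * Y z + (1 - t) * Y w"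
  by (simp add: Y_def algebra_simps)

lemma Y_neg_convex: "convex {z. Y z \<le> 0}"
  unfolding convex_def
proof (intro allI impI ballI)
  fix z w and s t :: real
  assume zw: "z \<in> {z. Y z \<le> 0}" "w \<in> {z. Y z \<le> 0}" and st: "0 \<le> s" "0 \<le> t" "s + t = 1"
  then have "t = 1 - s" by simp
  then have "Y (s *\<^sub>R z + t *\<^sub>R w) = s * Y z + t * Y w"
    using Y_lin[of s z w] by (simp add: scaleR_conv_of_real)
  moreover have "s * Y z \<le> 0" "t * Y w \<le> 0" using zw st by (simp_all add: mult_nonneg_nonpos)
  ultimately show "s *\<^sub>R z + t *\<^sub>R w \<in> {z. Y z \<le> 0}" by simp
qed

lemma vert_gam: "j < n \<Longrightarrow> gam (cum j) = v j"
  using gam_edge[of j "cum j"] cum_Suc[of j] len_pos[of j] by simp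

lemma cum_lt: "j < n \<Longrightarrow> cum j < perim"
proof -
  assume j: "j < n"
  have "cum j < cum (Suc j)" using cum_Suc[of j] len_pos[OF j] by simp
  also have "\<dots> \<le> cum n" using cum_mono[of "Suc j" n] j by simp
  finally show ?thesis using perim_cum by simp
qed

lemma some_pos: "(\<forall>s. sa \<le> s \<and> s \<le> sb \<longrightarrow> Y (Gam s) \<ge> 0) \<or> (\<forall>s. sb \<le> s \<and> s \<le> sa + perim \<longrightarrow> Y (Gam s) \<ge> 0)"
proof (rule ccontr)
  assume "\<not> ?thesis"
  then have n1: "\<forall>s. sa \<le> s \<and> s \<le> sb \<longrightarrow> Y (Gam s) \<le> 0"
    and n2: "\<forall>s. sb \<le> s \<and> s \<le> sa + perim \<longrightarrow> Y (Gam s) \<le> 0"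
    using arc1_sign arc2_sign by blast+
  have vneg: "Y (v j) \<le> 0" if j: "j < n" for j
  proof -
    have c: "0 \<le> cum j" "cum j < perim" using cum_nonneg[of j] cum_lt[OF j] j by simp_all
    have vj: "v j = gam (cum j)" using vert_gam[OF j] by simp
    consider "sa \<le> cum j \<and> cum j \<le> sb" | "sb < cum j" | "cum j < sa" by linarith
    then show ?thesis
    proof cases
      case 1 then show ?thesis using n1 Gam1[of "cum j"] c vj by auto
    next
      case 2
      have "Y (Gam (cum j)) \<le> 0" using n2[rule_format, of "cum j"] 2 c sa0 by simp
      then show ?thesis using Gam1[of "cum j"] c vj by simp
    next
      case 3
      have "Gam (cum j + perim) = gam (cum j)" using Gam2[of "cum j + perim"] c by simp
      then show ?thesis using n2[rule_format, of "cum j + perim"] 3 c vj sab sbP by auto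
    qed
  qed
  have PPneg: "PP \<subseteq> {z. Y z \<le> 0}"
    unfolding polygon_region_def using vneg Y_neg_convex by (intro hull_minimal) auto
  define m where "m = of_real (1/2) * a + of_real (1 - 1/2) * b"
  have mPP: "m \<in> PP" unfolding m_def
    using convexD[OF convex_PP a_front(2) b_front(2), of "1/2" "1/2"] by (simp add: scaleR_conv_of_real)
  have Ym: "Y m = 0" unfolding m_def using Y_lin[of "1/2" a b] Ya Yb by simp
  have "m \<notin> interior PP"
  proof
    assume "m \<in> interior PP"
    then obtain r where r: "r > 0" "ball m r \<subseteq> PP" using mem_interior by blast
    have "dist m (m + of_real (r/2) * (\<i> * u)) = r / 2" using u1 r
      by (simp add: dist_norm norm_mult)
    then have "m + of_real (r/2) * (\<i> * u) \<in> PP" using r by auto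
    then have "Y (m + of_real (r/2) * (\<i> * u)) \<le> 0" using PPneg by auto
    moreover have "Y (m + of_real (r/2) * (\<i> * u)) = Y m + r/2 * Im (\<i> * (cnj u * u))"
      by (simp add: Y_def algebra_simps)
    moreover have "cnj u * u = 1" using ucnj by (simp add: mult.commute)
    ultimately show False using Ym r by simp
  qed
  then have "m \<in> frontier PP" using mPP in_frontier by simp
  moreover have "m \<in> M" using Y_zero_M Ym by simp
  ultimately have "m \<in> {a, b}" using front by blast
  moreover have "m = a \<Longrightarrow> False"
  proof -
    assume "m = a"
    have "m - a = of_real (1/2) * (b - a)" unfolding m_def by (simp add: algebra_simps)
    then have "of_real (1/2) * (b - a) = 0" using \<open>m = a\<close> by simp
    then show False using ab by simp
  qed
  moreover have "m = b \<Longrightarrow> False"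
  proof -
    assume "m = b"
    have "m - b = of_real (1/2) * (a - b)" unfolding m_def by (simp add: algebra_simps)
    then have "of_real (1/2) * (a - b) = 0" using \<open>m = b\<close> by simp
    then show False using ab by simp
  qed
  ultimately show False by blast
qed

end


context arc_setup begin

definition oc' :: complex where "oc' = oc - of_real (rho/2) * (\<i> * u)"
definition T :: real where "T = - Y oc'"
definition h :: "complex \<Rightarrow> real" where "h z = Re (cnj u * (z - oc')) / Im (cnj u * (z - oc'))"

lemma cnj_u_u: "cnj u * u = 1" using ucnj by (simp add: mult.commute)

lemma Y_oc': "Y oc' = Y oc - rho/2"
proof -
  have "Y oc' = Y oc - rho/2 * Im (\<i> * (cnj u * u))"
    by (simp add: Y_def oc'_def algebra_simps)
  then show ?thesis using cnj_u_u by simp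
qed

lemma T_ge: "T \<ge> rho/2" using Y_oc' uo unfolding T_def Y_def by simp

lemma ball': "cball oc' (rho/2) \<subseteq> PP"
proof
  fix z assume z: "z \<in> cball oc' (rho/2)"
  have "dist oc' oc = rho/2" using u1 rho by (simp add: oc'_def dist_norm norm_mult)
  then have "dist oc z \<le> rho" using z dist_triangle[of oc z oc'] by (simp add: dist_commute)
  then show "z \<in> PP" using ball by auto
qed

lemma oc'_PP: "oc' \<in> PP" using ball' rho by auto

lemma R_nonneg: "R \<ge> 0"
proof -
  have "dist x oc' \<le> R" using circ oc'_PP by auto
  then show ?thesis using zero_le_dist[of x oc'] by linarith
qed

lemma diam: "z \<in> PP \<Longrightarrow> cmod (z - oc') \<le> 2 * R"
proof -
  assume z: "z \<in> PP"
  have "dist x z \<le> R" "dist x oc' \<le> R" using circ z oc'_PP by auto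
  then have "dist z oc' \<le> 2 * R" using dist_triangle[of z oc' x] by (simp add: dist_commute)
  then show ?thesis by (simp add: dist_norm)
qed

lemma Im_shift: "Im (cnj u * (z - oc')) = Y z + T"
  unfolding T_def Y_def by (simp add: algebra_simps)

lemma g_oc': assumes k: "k < n" shows "g k oc' \<ge> rho/2 * cmod (e k)"
proof -
  have en: "cmod (e k) > 0" using e_nz k by simp
  define t where "t = rho / 2 / cmod (e k)"
  have tpos: "t > 0" using rho en by (simp add: t_def)
  have "dist oc' (oc' - of_real t * (\<i> * e k)) = t * cmod (e k)" using tpos
    by (simp add: dist_norm norm_mult)
  also have "\<dots> = rho / 2" using en by (simp add: t_def)
  finally have "oc' - of_real t * (\<i> * e k) \<in> PP" using ball' by auto
  then have "g k (oc' - of_real t * (\<i> * e k)) \<ge> 0" using g_PP k by simp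
  moreover have "g k (oc' - of_real t * (\<i> * e k)) = g k oc' - t * (cmod (e k))^2" by (rule g_shift)
  moreover have "t * (cmod (e k))^2 = rho/2 * cmod (e k)" using en by (simp add: t_def power2_eq_square)
  ultimately show ?thesis by linarith
qed

lemma edge_cross: "cross (v k + of_real bb * e k - oc') (v k + of_real aa * e k - oc') = (aa - bb) * g k oc'"
  by (simp add: g_def cross_def algebra_simps)

lemma ratio_id: fixes xp yp xq yq :: real assumes "yp \<noteq> 0" "yq \<noteq> 0"
  shows "xp * yq - yp * xq = yp * yq * (xp / yp - xq / yq)"
  using assms by (simp add: field_simps)

lemma cross_h: assumes "Im (cnj u * (p - oc')) > 0" "Im (cnj u * (q - oc')) > 0"
  shows "cross (p - oc') (q - oc') = Im (cnj u * (p - oc')) * Im (cnj u * (q - oc')) * (h p - h q)"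
proof -
  have "cross (p - oc') (q - oc') = cross (cnj u * (p - oc')) (cnj u * (q - oc'))"
    using cross_rotinv[OF u1] by simp
  also have "\<dots> = Re (cnj u * (p - oc')) * Im (cnj u * (q - oc')) - Im (cnj u * (p - oc')) * Re (cnj u * (q - oc'))"
    by (rule cross_coords)
  also have "\<dots> = Im (cnj u * (p - oc')) * Im (cnj u * (q - oc')) * (h p - h q)"
    unfolding h_def by (rule ratio_id) (use assms in auto)
  finally show ?thesis .
qed

definition G :: "real \<Rightarrow> real" where "G t = rho/2 * t + (2*R)^2 * h (gam t)"

lemma piece: assumes k: "k < n" and s: "cum k \<le> s'" "s' \<le> s" "s \<le> cum (Suc k)"
  and Y: "Y (gam s') \<ge> 0" "Y (gam s) \<ge> 0"
  shows "G s \<le> G s'"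
proof -
  have lp: "len k > 0" using len_pos k by simp
  define bb where "bb = (s' - cum k) / len k"
  define aa where "aa = (s - cum k) / len k"
  have p: "gam s' = v k + of_real bb * e k" unfolding bb_def by (rule gam_edge[OF k]) (use s in auto)
  have q: "gam s = v k + of_real aa * e k" unfolding aa_def by (rule gam_edge[OF k]) (use s in auto)
  have sdiff: "s - s' = (aa - bb) * cmod (e k)" using lp len_e[of k] by (simp add: aa_def bb_def field_simps)
  have aa: "aa - bb \<ge> 0" using s lp by (simp add: aa_def bb_def divide_right_mono)
  have cr: "cross (gam s' - oc') (gam s - oc') = (aa - bb) * g k oc'" unfolding p q by (rule edge_cross)
  have "(aa - bb) * (rho/2 * cmod (e k)) \<le> (aa - bb) * g k oc'" using g_oc'[OF k] aa by (rule mult_left_mono)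
  also have "(aa - bb) * (rho/2 * cmod (e k)) = rho/2 * (s - s')" using sdiff by simp
  finally have low: "rho/2 * (s - s') \<le> cross (gam s' - oc') (gam s - oc')" using cr by (simp add: ac_simps)
  have sP: "gam s' \<in> PP" "gam s \<in> PP" using gam_PP[of s'] gam_PP[of s] s cum_nonneg[of k] cum_mono[of "Suc k" n] k perim_cum
    by (auto simp del: cum_len_def)
  define yp where "yp = Im (cnj u * (gam s' - oc'))"
  define yq where "yq = Im (cnj u * (gam s - oc'))"
  have ypos: "yp > 0" "yq > 0" unfolding yp_def yq_def Im_shift using Y T_ge rho by linarith+
  have "\<bar>yp\<bar> \<le> cmod (cnj u * (gam s' - oc'))" unfolding yp_def by (rule abs_Im_le_cmod)
  also have "\<dots> = cmod (gam s' - oc')" using u1 by (simp add: norm_mult)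
  also have "\<dots> \<le> 2 * R" using diam sP by simp
  finally have yp2: "yp \<le> 2 * R" by simp
  have "\<bar>yq\<bar> \<le> cmod (cnj u * (gam s - oc'))" unfolding yq_def by (rule abs_Im_le_cmod)
  also have "\<dots> = cmod (gam s - oc')" using u1 by (simp add: norm_mult)
  also have "\<dots> \<le> 2 * R" using diam sP by simp
  finally have yq2: "yq \<le> 2 * R" by simp
  have ch: "cross (gam s' - oc') (gam s - oc') = yp * yq * (h (gam s') - h (gam s))"
    unfolding yp_def yq_def by (rule cross_h) (use ypos in \<open>simp_all add: yp_def yq_def\<close>)
  have "rho/2 * (s - s') \<ge> 0" using s rho by simp
  then have crpos: "cross (gam s' - oc') (gam s - oc') \<ge> 0" using low by linarith
  have yy: "yp * yq > 0" using ypos by simp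
  have hd: "h (gam s') - h (gam s) \<ge> 0"
  proof (rule ccontr)
    assume "\<not> ?thesis"
    then have "yp * yq * (h (gam s') - h (gam s)) < 0" using yy by (simp add: mult_pos_neg)
    then show False using crpos ch by simp
  qed
  have "yp * yq \<le> (2 * R) * (2 * R)" using yp2 yq2 ypos by (intro mult_mono) auto
  then have "yp * yq * (h (gam s') - h (gam s)) \<le> (2*R)^2 * (h (gam s') - h (gam s))"
    using hd by (simp add: power2_eq_square mult_right_mono)
  then have fin: "rho/2 * (s - s') \<le> (2*R)^2 * (h (gam s') - h (gam s))" using low ch by linarith
  have e1: "rho/2 * (s - s') = rho/2 * s - rho/2 * s'" by (simp add: right_diff_distrib)
  have e2: "(2*R)^2 * (h (gam s') - h (gam s)) = (2*R)^2 * h (gam s') - (2*R)^2 * h (gam s)"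
    by (simp add: right_diff_distrib)
  show ?thesis using fin unfolding G_def e1 e2 by linarith
qed

end


lemma final_alg: fixes rho X R d :: real assumes "rho > 0" "rho/2 * X \<le> (2*R)^2 * (2 * d / rho)"
  shows "X \<le> 16 * R^2 / rho^2 * d"
proof -
  have "rho/2 * X * (2 * rho) \<le> (2*R)^2 * (2 * d / rho) * (2 * rho)"
    using assms by (intro mult_right_mono) auto
  then have "rho^2 * X \<le> 16 * R^2 * d" using assms by (simp add: field_simps power2_eq_square)
  then show ?thesis using assms by (simp add: field_simps power2_eq_square)
qed

context arc_setup begin

lemma arc_est: assumes "0 \<le> l" "l \<le> r" "r \<le> perim" and Y: "\<And>t. l \<le> t \<Longrightarrow> t \<le> r \<Longrightarrow> Y (gam t) \<ge> 0"
  shows "G r \<le> G l"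
proof (rule piecewise_mono[of n cum l r G])
  fix k s' s assume "k < n" "cum k \<le> s'" "s' \<le> s" "s \<le> cum (Suc k)" "l \<le> s'" "s \<le> r"
  then show "G s \<le> G s'" using piece Y by simp
qed (use assms cum_0 perim_cum in auto)

lemma G_diff: "G r \<le> G l \<Longrightarrow> rho/2 * (r - l) \<le> (2*R)^2 * (h (gam l) - h (gam r))"
  unfolding G_def by (simp add: right_diff_distrib)

lemma hab: "\<bar>h a - h b\<bar> \<le> 2 * dist a b / rho"
proof -
  have Tpos: "T > 0" using T_ge rho by linarith
  have ia: "Im (cnj u * (a - oc')) = T" using Im_shift[of a] Ya by simp
  have ib: "Im (cnj u * (b - oc')) = T" using Im_shift[of b] Yb by simp
  have "h a - h b = (Re (cnj u * (a - oc')) - Re (cnj u * (b - oc'))) / T"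
    unfolding h_def ia ib by (simp add: diff_divide_distrib)
  also have "Re (cnj u * (a - oc')) - Re (cnj u * (b - oc')) = Re (cnj u * (a - b))"
    by (simp add: algebra_simps)
  finally have eq: "\<bar>h a - h b\<bar> = \<bar>Re (cnj u * (a - b))\<bar> / T" using Tpos by simp
  have "\<bar>Re (cnj u * (a - b))\<bar> \<le> cmod (cnj u * (a - b))" by (rule abs_Re_le_cmod)
  also have "\<dots> = dist a b" using u1 by (simp add: norm_mult dist_norm)
  finally have n1: "\<bar>Re (cnj u * (a - b))\<bar> \<le> dist a b" .
  have "\<bar>Re (cnj u * (a - b))\<bar> / T \<le> dist a b / T" using n1 Tpos by (simp add: divide_right_mono)
  also have "\<dots> \<le> dist a b / (rho/2)" using T_ge rho by (intro divide_left_mono) auto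
  also have "dist a b / (rho/2) = 2 * dist a b / rho" by simp
  finally show ?thesis unfolding eq .
qed

lemma main_loc: "min (sb - sa) (perim - (sb - sa)) \<le> 16 * R^2 / rho^2 * dist a b"
proof -
  have D0: "(2*R)^2 \<ge> 0" by simp
  have hab': "h a - h b \<le> 2 * dist a b / rho" "h b - h a \<le> 2 * dist a b / rho" using hab by linarith+
  from some_pos show ?thesis
  proof
    assume p1: "\<forall>s. sa \<le> s \<and> s \<le> sb \<longrightarrow> Y (Gam s) \<ge> 0"
    have "G sb \<le> G sa"
    proof (rule arc_est)
      fix t assume "sa \<le> t" "t \<le> sb"
      then show "Y (gam t) \<ge> 0" using p1 Gam1[of t] sbP by auto
    qed (use sa0 sab sbP in auto)
    then have "rho/2 * (sb - sa) \<le> (2*R)^2 * (h a - h b)" using G_diff a_eq b_eq by simp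
    also have "\<dots> \<le> (2*R)^2 * (2 * dist a b / rho)" using hab' D0 by (intro mult_left_mono) auto
    finally have "sb - sa \<le> 16 * R^2 / rho^2 * dist a b" by (rule final_alg[OF rho])
    then show ?thesis by simp
  next
    assume p2: "\<forall>s. sb \<le> s \<and> s \<le> sa + perim \<longrightarrow> Y (Gam s) \<ge> 0"
    have "G perim \<le> G sb"
    proof (rule arc_est)
      fix t assume "sb \<le> t" "t \<le> perim"
      then show "Y (gam t) \<ge> 0" using p2 Gam1[of t] sa0 by auto
    qed (use sa0 sab sbP in auto)
    then have i1: "rho/2 * (perim - sb) \<le> (2*R)^2 * (h b - h (gam perim))" using G_diff b_eq by simp
    have "G sa \<le> G 0"
    proof (rule arc_est)
      fix t assume t: "0 \<le> t" "t \<le> sa"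
      have "Y (Gam (t + perim)) \<ge> 0" using p2 t sab sbP by auto
      moreover have "Gam (t + perim) = gam t" using Gam2[of "t + perim"] t by simp
      ultimately show "Y (gam t) \<ge> 0" by simp
    qed (use sa0 sab sbP in auto)
    then have i2: "rho/2 * (sa - 0) \<le> (2*R)^2 * (h (gam 0) - h a)" unfolding a_eq by (rule G_diff)
    have g0: "gam perim = gam 0" using gam_ge[of perim] gam_le0[of 0] by simp
    have "rho/2 * (perim - (sb - sa)) = rho/2 * (perim - sb) + rho/2 * (sa - 0)" by (simp add: field_simps)
    also have "\<dots> \<le> (2*R)^2 * (h b - h (gam perim)) + (2*R)^2 * (h (gam 0) - h a)" using i1 i2 by linarith
    also have "\<dots> = (2*R)^2 * (h b - h a)" using g0 by (simp add: algebra_simps)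
    also have "\<dots> \<le> (2*R)^2 * (2 * dist a b / rho)" using hab' D0 by (intro mult_left_mono) auto
    finally have "perim - (sb - sa) \<le> 16 * R^2 / rho^2 * dist a b" by (rule final_alg[OF rho])
    then show ?thesis by simp
  qed
qed

end


context cpoly begin

lemma PP_ball: "\<exists>z r. r > 0 \<and> cball z r \<subseteq> PP"
proof -
  have n: "n \<ge> 3" by (rule n3)
  have e0: "e 0 = v 1 - v 0" using n by (simp add: e_def)
  have pos: "g 0 (v 2) > 0" using vcross[of 0 2] n by simp
  have nc: "\<not> collinear {v 0, v 1, v 2}"
  proof
    assume "collinear {v 0, v 1, v 2}"
    then obtain w where w: "\<forall>x\<in>{v 0, v 1, v 2}. \<forall>y\<in>{v 0, v 1, v 2}. \<exists>c. x - y = c *\<^sub>R w"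
      unfolding collinear_def by blast
    obtain c1 where c1: "v 1 - v 0 = c1 *\<^sub>R w" using w by blast
    obtain c2 where c2: "v 2 - v 0 = c2 *\<^sub>R w" using w by blast
    have "g 0 (v 2) = cross (c1 *\<^sub>R w) (c2 *\<^sub>R w)" unfolding g_def e0 c1 c2 by simp
    also have "\<dots> = 0" by (simp add: cross_def scaleR_conv_of_real algebra_simps)
    finally show False using pos by simp
  qed
  have sub: "{v 0, v 1, v 2} \<subseteq> v ` {..<n}" using n by auto
  define z where "z = (1/3) *\<^sub>R v 0 + (1/3) *\<^sub>R v 1 + (1/3) *\<^sub>R v 2"
  have eq: "interior (convex hull {v 0, v 1, v 2}) =
         {w. \<exists>x y z. 0 < x \<and> 0 < y \<and> 0 < z \<and> x + y + z = 1 \<and> x *\<^sub>R v 0 + y *\<^sub>R v 1 + z *\<^sub>R v 2 = w}"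
    by (rule interior_convex_hull_3_minimal[OF nc]) simp
  have "z \<in> interior (convex hull {v 0, v 1, v 2})"
    unfolding eq z_def by (intro CollectI exI[where x="1/3"]) simp
  also have "\<dots> \<subseteq> interior PP" unfolding polygon_region_def
    by (intro interior_mono hull_mono sub)
  finally have "z \<in> interior PP" .
  then obtain r where "r > 0" "cball z r \<subseteq> PP" using mem_interior_cball by blast
  then show ?thesis by blast
qed

end



lemma ordered_case:
  fixes c :: real
  assumes c: "c > 1" and cp: "convex_polygon n v" and fatP: "fat c (polygon_region n v)"
    and line: "is_line M" and ab: "a \<noteq> b" and front: "M \<inter> frontier (polygon_region n v) = {a, b}"
    and ata: "at_arclen n v sa a" and atb: "at_arclen n v sb b" and sab: "sa < sb"
  shows "min (sb - sa) (perimeter n v - (sb - sa)) \<le> 64 * (c + 1)^2 * dist a b"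
proof -
  interpret cpoly n v by (rule cpoly.intro[OF cp])
  obtain z r0 where zr: "r0 > 0" "cball z r0 \<subseteq> PP" using PP_ball by blast
  define Sr where "Sr = {r. \<exists>y. cball y r \<subseteq> PP}"
  define SR where "SR = {R. \<exists>x. PP \<subseteq> cball x R}"
  have "bounded PP" using compact_PP by (rule compact_imp_bounded)
  then obtain R1 x0 where R1: "PP \<subseteq> cball x0 R1" "0 \<le> R1" using bounded_subset_cball by blast
  have r0S: "r0 \<in> Sr" using zr unfolding Sr_def by blast
  have bddA: "bdd_above Sr"
  proof (rule bdd_aboveI[of _ R1])
    fix r assume "r \<in> Sr"
    then obtain y where "cball y r \<subseteq> PP" unfolding Sr_def by blast
    then have "cball y r \<subseteq> cball x0 R1" using R1 by blast
    then have "dist y x0 + r \<le> R1 \<or> r < 0" using cball_subset_cball_iff by blast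
    then show "r \<le> R1" using R1 zero_le_dist[of y x0] by linarith
  qed
  have v0P: "v 0 \<in> PP" using vert_PP n3 by simp
  have bddB: "bdd_below SR"
  proof (rule bdd_belowI[of _ 0])
    fix R assume "R \<in> SR"
    then obtain x where "PP \<subseteq> cball x R" unfolding SR_def by blast
    then have "dist x (v 0) \<le> R" using v0P by auto
    then show "0 \<le> R" using zero_le_dist[of x "v 0"] by linarith
  qed
  have SRne: "SR \<noteq> {}" using R1 unfolding SR_def by blast
  define ri where "ri = inradius PP"
  define Rc where "Rc = circumradius PP"
  have ri_eq: "ri = Sup Sr" unfolding ri_def inradius_def Sr_def by simp
  have Rc_eq: "Rc = Inf SR" unfolding Rc_def circumradius_def SR_def by simp
  have ripos: "ri > 0" using cSup_upper[OF r0S bddA] zr ri_eq by simp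
  have "Rc / ri \<le> c" using fatP unfolding fat_def Rc_def ri_def by simp
  then have Rc_le: "Rc \<le> c * ri" using ripos by (simp add: divide_le_eq)
  have "ri / 2 < Sup Sr" using ripos ri_eq by simp
  then obtain rho where rhoS: "rho \<in> Sr" "ri / 2 < rho" using less_cSup_iff[of Sr "ri/2"] r0S bddA by blast
  then obtain oc where oc: "cball oc rho \<subseteq> PP" unfolding Sr_def by blast
  have rhopos: "rho > 0" using rhoS ripos by simp
  have "Inf SR < Rc + ri" using ripos Rc_eq by simp
  then obtain R0 where R0: "R0 \<in> SR" "R0 < Rc + ri" using cInf_less_iff[of SR "Rc + ri"] SRne bddB by blast
  then obtain x where x: "PP \<subseteq> cball x R0" unfolding SR_def by blast
  have R0nn: "R0 \<ge> 0"
  proof -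
    have "dist x (v 0) \<le> R0" using x v0P by auto
    then show ?thesis using zero_le_dist[of x "v 0"] by linarith
  qed
  have aeq: "a = gam sa" "0 \<le> sa" using at_arclen_gam[OF ata] by auto
  have beq: "b = gam sb" "sb < perim" using at_arclen_gam[OF atb] by auto
  define L where "L = dist a b"
  have Lpos: "L > 0" using ab unfolding L_def by simp
  define u0 where "u0 = (b - a) / of_real L"
  have u0n: "cmod u0 = 1" unfolding u0_def L_def using ab by (simp add: norm_divide dist_norm norm_minus_commute)
  have u0ab: "Im (cnj u0 * (b - a)) = 0"
  proof -
    have "cnj u0 * (b - a) = (cnj (b - a) * (b - a)) / of_real L" unfolding u0_def by simp
    also have "cnj (b - a) * (b - a) = of_real ((cmod (b - a))^2)"
      using complex_norm_square[of "b - a"] by (simp add: mult.commute)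
    finally have "cnj u0 * (b - a) = of_real ((cmod (b - a))^2 / L)" by simp
    then show ?thesis by simp
  qed
  define u where "u = (if Im (cnj u0 * (oc - a)) \<le> 0 then u0 else - u0)"
  have u1: "cmod u = 1" using u0n unfolding u_def by simp
  have uab: "Im (cnj u * (b - a)) = 0" using u0ab unfolding u_def by simp
  have uo: "Im (cnj u * (oc - a)) \<le> 0" unfolding u_def by simp
  interpret arc_setup n v M a b sa sb oc rho x R0 u
    by (unfold_locales) (use line front ab aeq beq sab oc rhopos x u1 uab uo in auto)
  have m: "min (sb - sa) (perim - (sb - sa)) \<le> 16 * R0^2 / rho^2 * dist a b" by (rule main_loc)
  have "R0 \<le> (c + 1) * ri" using R0 Rc_le by (simp add: algebra_simps)
  also have "\<dots> \<le> (c + 1) * (2 * rho)" using rhoS c by (intro mult_left_mono) auto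
  also have "(c + 1) * (2 * rho) = 2 * (c + 1) * rho" by simp
  finally have R0b: "R0 \<le> 2 * (c + 1) * rho" .
  have "R0^2 \<le> (2 * (c + 1) * rho)^2" using R0b R0nn by (intro power_mono) auto
  then have "16 * R0^2 / rho^2 \<le> 16 * (2 * (c + 1) * rho)^2 / rho^2"
    using rhopos by (intro divide_right_mono) auto
  also have "\<dots> = 64 * (c + 1)^2"
  proof -
    have sq: "(2 * (c + 1) * rho)^2 = 4 * (c+1)^2 * rho^2" by (simp add: power2_eq_square algebra_simps)
    have "rho^2 > 0" using rhopos by simp
    then show ?thesis unfolding sq by (simp add: field_simps)
  qed
  finally have "16 * R0^2 / rho^2 * dist a b \<le> 64 * (c + 1)^2 * dist a b"
    by (intro mult_right_mono) auto
  then show ?thesis using m by simp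
qed

theorem lemma2p2:
  fixes c :: real
  assumes "c > 1"
  shows "\<exists>d::real. \<forall>n v M a b sa sb.
     convex_polygon n v \<and> fat c (polygon_region n v) \<and>
     is_line M \<and> a \<noteq> b \<and> M \<inter> frontier (polygon_region n v) = {a, b} \<and>
     at_arclen n v sa a \<and> at_arclen n v sb b \<longrightarrow>
     min \<bar>sa - sb\<bar> (perimeter n v - \<bar>sa - sb\<bar>) \<le> d * dist a b"
proof (intro exI allI impI, elim conjE)
  fix n v M a b sa sb
  assume h: "convex_polygon n v" "fat c (polygon_region n v)" "is_line M" "a \<noteq> b"
    "M \<inter> frontier (polygon_region n v) = {a, b}" "at_arclen n v sa a" "at_arclen n v sb b"
  consider "sa < sb" | "sa = sb" | "sb < sa" by linarith
  then show "min \<bar>sa - sb\<bar> (perimeter n v - \<bar>sa - sb\<bar>) \<le> 64 * (c + 1)^2 * dist a b"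
  proof cases
    case 1
    then have "\<bar>sa - sb\<bar> = sb - sa" by simp
    then show ?thesis using ordered_case[OF assms h(1-5) h(6,7) 1] by simp
  next
    case 2
    then show ?thesis by (simp add: min_le_iff_disj)
  next
    case 3
    then have "\<bar>sa - sb\<bar> = sa - sb" by simp
    moreover have "M \<inter> frontier (polygon_region n v) = {b, a}" using h(5) by blast
    ultimately show ?thesis using ordered_case[OF assms h(1-3) _ _ h(7,6) 3] h(4)
      by (simp add: dist_commute)
  qed
qed


end
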